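(* Let $\mathcal{A}s_3\langle X\rangle$ be the free third-type associative algebra. For all $a,b,c,d\in\mathcal{A}s_3\langle X\rangle$, \[ [[a,b],[c,d]]=[[a,b],\{c,d\}]=[\{a,b\},\{c,d\}]=\{\{a,b\},[c,d]\}=\{[a,b],[c,d]\}=0 \] and \[ [[[a,b],c],d]=\{[[a,b],c],d\}=[\{[a,b],c\},d]=[[\{a,b\},c],d]=[\{\{a,b\},c\},d]=\{[\{a,b\},c],d\}=\{\{[a,b],c\},d\}=0. \]
   Context: An associative algebra is called of the third type if it satisfies $abc+bac-bca-cba=0$ for all $a,b,c$. $\mathcal{A}s_3\langle X\rangle$ is the free algebra of this variety on a countable set $X$ over a field of characteristic $0$. Here $[a,b]=ab-ba$ is the commutator and $\{a,b\}=ab+ba$ the anti-commutator. *)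

theory Defs
  imports Main "HOL.Modules"
begin

definition comm :: "'a::ring \<Rightarrow> 'a \<Rightarrow> 'a" where
  "comm a b = a * b - b * a"

definition acomm :: "'a::ring \<Rightarrow> 'a \<Rightarrow> 'a" where
  "acomm a b = a * b + b * a"

text \<open>An associative (not necessarily unital) algebra over a field K of
characteristic 0: the multiplicative structure is a ring (class ring, which is
associative and non-unital), the scalar action makes it a K-module, and
multiplication is K-bilinear.\<close>
definition assoc_algebra :: "('k::field_char_0 \<Rightarrow> 'a::ring \<Rightarrow> 'a) \<Rightarrow> bool" where
  "assoc_algebra scale \<longleftrightarrow> module scale \<and>
     (\<forall>k a b. scale k (a * b) = scale k a * b) \<and>
     (\<forall>k a b. scale k (a * b) = a * scale k b)"

definition third_type :: "('k::field_char_0 \<Rightarrow> 'a::ring \<Rightarrow> 'a) \<Rightarrow> bool" where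
  "third_type scale \<longleftrightarrow> assoc_algebra scale \<and>
     (\<forall>a b c::'a. a*b*c + b*a*c - b*c*a - c*b*a = 0)"

end

theory Submission
  imports Defs
begin

lemma Qlem:
  fixes a b c d :: "'a::ring"
  assumes T: "\<And>x y z::'a. x*y*z + y*x*z - y*z*x - z*y*x = 0"
  shows "a*b*c*d - a*c*b*d = 0"
proof -
  have Q: "True" by simp
  have e0: "((a*b*c + b*a*c - b*c*a - c*b*a) * d) = 0" using T Q by simp
  have e1: "((a*c*b + c*a*b - c*b*a - b*c*a) * d) = 0" using T Q by simp
  have e2: "(b * (a*c*d + c*a*d - c*d*a - d*c*a)) = 0" using T Q by simp
  have e3: "((c*a)*b*d + b*(c*a)*d - b*d*(c*a) - d*b*(c*a)) = 0" using T Q by simp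
  have e4: "((b*d*c + d*b*c - d*c*b - c*d*b) * a) = 0" using T Q by simp
  have e5: "(c * (a*d*b + d*a*b - d*b*a - b*d*a)) = 0" using T Q by simp
  have e6: "(b*d*(c*a) + d*b*(c*a) - d*(c*a)*b - (c*a)*d*b) = 0" using T Q by simp
  have e7: "(b*c*(d*a) + c*b*(d*a) - c*(d*a)*b - (d*a)*c*b) = 0" using T Q by simp
  have e8: "(d * (a*c*b + c*a*b - c*b*a - b*c*a)) = 0" using T Q by simp
  have "a*b*c*d - a*c*b*d = (((a*b*c + b*a*c - b*c*a - c*b*a) * d)) - (((a*c*b + c*a*b - c*b*a - b*c*a) * d)) - ((b * (a*c*d + c*a*d - c*d*a - d*c*a))) + (((c*a)*b*d + b*(c*a)*d - b*d*(c*a) - d*b*(c*a))) + (((b*d*c + d*b*c - d*c*b - c*d*b) * a)) - ((c * (a*d*b + d*a*b - d*b*a - b*d*a))) - ((b*d*(c*a) + d*b*(c*a) - d*(c*a)*b - (c*a)*d*b)) - ((b*c*(d*a) + c*b*(d*a) - c*(d*a)*b - (d*a)*c*b)) - ((d * (a*c*b + c*a*b - c*b*a - b*c*a)))"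
    by (simp add: algebra_simps)
  then show ?thesis using e0 e1 e2 e3 e4 e5 e6 e7 e8 by simp
qed

lemma P1lem:
  fixes a b c d :: "'a::ring"
  assumes T: "\<And>x y z::'a. x*y*z + y*x*z - y*z*x - z*y*x = 0"
  shows "a*b*c*d - b*a*c*d = 0"
proof -
  note Q = Qlem[OF T]
  have e0: "((a*b)*c*d + c*(a*b)*d - c*d*(a*b) - d*c*(a*b)) = 0" using T Q by simp
  have e1: "(b*(c*a)*d + (c*a)*b*d - (c*a)*d*b - d*(c*a)*b) = 0" using T Q by simp
  have e2: "((b * a * c * d) - (b * c * a * d)) = 0" using T Q by simp
  have e3: "((c * a * d * b) - (c * d * a * b)) = 0" using T Q by simp
  have "a*b*c*d - b*a*c*d = (((a*b)*c*d + c*(a*b)*d - c*d*(a*b) - d*c*(a*b))) - ((b*(c*a)*d + (c*a)*b*d - (c*a)*d*b - d*(c*a)*b)) - (((b * a * c * d) - (b * c * a * d))) - (((c * a * d * b) - (c * d * a * b)))"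
    by (simp add: algebra_simps)
  then show ?thesis using e0 e1 e2 e3 by simp
qed

lemma P3lem:
  fixes a b c d :: "'a::ring"
  assumes T: "\<And>x y z::'a. x*y*z + y*x*z - y*z*x - z*y*x = 0"
  shows "(a*b*c*d - a*b*d*c) + (a*b*c*d - a*b*d*c) = 0"
proof -
  note Q = Qlem[OF T]
  have e0: "(a * (c*b*d + b*c*d - b*d*c - d*b*c)) = 0" using T Q by simp
  have e1: "((a * b * c * d) - (a * c * b * d)) = 0" using T Q by simp
  have e2: "((a * b * d * c) - (a * d * b * c)) = 0" using T Q by simp
  have "(a*b*c*d - a*b*d*c) + (a*b*c*d - a*b*d*c) = ((a * (c*b*d + b*c*d - b*d*c - d*b*c))) + (((a * b * c * d) - (a * c * b * d))) - (((a * b * d * c) - (a * d * b * c)))"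
    by (simp add: algebra_simps)
  then show ?thesis using e0 e1 e2 by simp
qed


lemma halve:
  fixes scale :: "'k::field_char_0 \<Rightarrow> 'a::ring \<Rightarrow> 'a"
  assumes "third_type scale" and h: "x + x = (0::'a)"
  shows "x = 0"
proof -
  have M: "module scale" using assms(1) unfolding third_type_def assoc_algebra_def by blast
  have "x = scale 1 x" using module.scale_one[OF M] by simp
  also have "\<dots> = scale (1/2 + 1/2) x" by simp
  also have "\<dots> = scale (1/2) x + scale (1/2) x" by (rule module.scale_left_distrib[OF M])
  also have "\<dots> = scale (1/2) (x + x)" by (rule module.scale_right_distrib[OF M, symmetric])
  also have "\<dots> = 0" using h module.scale_zero_right[OF M] by simp
  finally show ?thesis .
qed

theorem mainTheorem5:
  fixes scale :: "'k::field_char_0 \<Rightarrow> 'a::ring \<Rightarrow> 'a"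
  assumes "third_type scale"
  shows "\<forall>a b c d :: 'a.
    comm (comm a b) (comm c d) = 0 \<and>
    comm (comm a b) (acomm c d) = 0 \<and>
    comm (acomm a b) (acomm c d) = 0 \<and>
    acomm (acomm a b) (comm c d) = 0 \<and>
    acomm (comm a b) (comm c d) = 0 \<and>
    comm (comm (comm a b) c) d = 0 \<and>
    acomm (comm (comm a b) c) d = 0 \<and>
    comm (acomm (comm a b) c) d = 0 \<and>
    comm (comm (acomm a b) c) d = 0 \<and>
    comm (acomm (acomm a b) c) d = 0 \<and>
    acomm (comm (acomm a b) c) d = 0 \<and>
    acomm (acomm (comm a b) c) d = 0"
  proof -
  have T: "\<And>x y z::'a. x*y*z + y*x*z - y*z*x - z*y*x = 0"
    using assms unfolding third_type_def by blast
  have r1: "\<And>x y z w::'a. x*(y*(z*w)) = y*(x*(z*w))"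
    using P1lem[OF T] by (simp add: mult.assoc)
  have r2: "\<And>x y z w::'a. x*(y*(z*w)) = x*(z*(y*w))"
    using Qlem[OF T] by (simp add: mult.assoc)
  have r3: "\<And>x y z w::'a. x*(y*(z*w)) = x*(y*(w*z))"
  proof -
    fix x y z w :: 'a
    have "x*y*z*w - x*y*w*z = 0" by (rule halve[OF assms P3lem[OF T]])
    then show "x*(y*(z*w)) = x*(y*(w*z))" by (simp add: mult.assoc)
  qed
  show ?thesis
  proof (intro allI)
    fix a b c d :: 'a
  have f_abcd: "a*(b*(c*d)) = a*(b*(c*d))" by (rule refl)
  have f_bacd: "b*(a*(c*d)) = a*(b*(c*d))" by (rule trans[OF r1[of b a c d] f_abcd])
  have f_acbd: "a*(c*(b*d)) = a*(b*(c*d))" by (rule trans[OF r2[of a c b d] f_abcd])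
  have f_abdc: "a*(b*(d*c)) = a*(b*(c*d))" by (rule trans[OF r3[of a b d c] f_abcd])
  have f_bcad: "b*(c*(a*d)) = a*(b*(c*d))" by (rule trans[OF r2[of b c a d] f_bacd])
  have f_badc: "b*(a*(d*c)) = a*(b*(c*d))" by (rule trans[OF r3[of b a d c] f_bacd])
  have f_cabd: "c*(a*(b*d)) = a*(b*(c*d))" by (rule trans[OF r1[of c a b d] f_acbd])
  have f_acdb: "a*(c*(d*b)) = a*(b*(c*d))" by (rule trans[OF r3[of a c d b] f_acbd])
  have f_adbc: "a*(d*(b*c)) = a*(b*(c*d))" by (rule trans[OF r2[of a d b c] f_abdc])
  have f_cbad: "c*(b*(a*d)) = a*(b*(c*d))" by (rule trans[OF r1[of c b a d] f_bcad])
  have f_bcda: "b*(c*(d*a)) = a*(b*(c*d))" by (rule trans[OF r3[of b c d a] f_bcad])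
  have f_bdac: "b*(d*(a*c)) = a*(b*(c*d))" by (rule trans[OF r2[of b d a c] f_badc])
  have f_cadb: "c*(a*(d*b)) = a*(b*(c*d))" by (rule trans[OF r3[of c a d b] f_cabd])
  have f_adcb: "a*(d*(c*b)) = a*(b*(c*d))" by (rule trans[OF r2[of a d c b] f_acdb])
  have f_dabc: "d*(a*(b*c)) = a*(b*(c*d))" by (rule trans[OF r1[of d a b c] f_adbc])
  have f_cbda: "c*(b*(d*a)) = a*(b*(c*d))" by (rule trans[OF r3[of c b d a] f_cbad])
  have f_bdca: "b*(d*(c*a)) = a*(b*(c*d))" by (rule trans[OF r2[of b d c a] f_bcda])
  have f_dbac: "d*(b*(a*c)) = a*(b*(c*d))" by (rule trans[OF r1[of d b a c] f_bdac])
  have f_cdab: "c*(d*(a*b)) = a*(b*(c*d))" by (rule trans[OF r2[of c d a b] f_cadb])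
  have f_dacb: "d*(a*(c*b)) = a*(b*(c*d))" by (rule trans[OF r1[of d a c b] f_adcb])
  have f_cdba: "c*(d*(b*a)) = a*(b*(c*d))" by (rule trans[OF r2[of c d b a] f_cbda])
  have f_dbca: "d*(b*(c*a)) = a*(b*(c*d))" by (rule trans[OF r1[of d b c a] f_bdca])
  have f_dcab: "d*(c*(a*b)) = a*(b*(c*d))" by (rule trans[OF r1[of d c a b] f_cdab])
  have f_dcba: "d*(c*(b*a)) = a*(b*(c*d))" by (rule trans[OF r1[of d c b a] f_cdba])
  note F = f_bacd f_acbd f_abdc f_bcad f_badc f_cabd f_acdb f_adbc f_cbad f_bcda f_bdac f_cadb f_adcb f_dabc f_cbda f_bdca f_dbac f_cdab f_dacb f_cdba f_dbca f_dcab f_dcba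

    show "comm (comm a b) (comm c d) = 0 \<and>
    comm (comm a b) (acomm c d) = 0 \<and>
    comm (acomm a b) (acomm c d) = 0 \<and>
    acomm (acomm a b) (comm c d) = 0 \<and>
    acomm (comm a b) (comm c d) = 0 \<and>
    comm (comm (comm a b) c) d = 0 \<and>
    acomm (comm (comm a b) c) d = 0 \<and>
    comm (acomm (comm a b) c) d = 0 \<and>
    comm (comm (acomm a b) c) d = 0 \<and>
    comm (acomm (acomm a b) c) d = 0 \<and>
    acomm (comm (acomm a b) c) d = 0 \<and>
    acomm (acomm (comm a b) c) d = 0"
      unfolding comm_def acomm_def by (simp add: algebra_simps F)
  qed
qed

end
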